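(* Let $k\le l$ be positive integers with $\gcd(k,l)=1$, let $n\ge 1$ and $m\ge 0$ be integers, and write $m=qn+r$ with integers $q\ge 0$, $0\le r<n$. Let $x,y$ be integers satisfying $x\ge rk$, $y\ge rl$ and $qxy+r(xl+yk)\ge klnr$, chosen so that $x+y$ is the smallest possible among all such pairs. If $x+y\le nk$, then there exists $A\in\mathcal D^{k,l}(m,n)$ such that ${\rm tdet}(A)\le nkq+x+y$.
   Context: $\mathcal D^{k,l}(m,n)$ denotes the set of all $nk\times nl$ matrices with nonnegative integer entries all of whose row sums equal $ml$ and all of whose column sums equal $mk$. For an $s\times t$ matrix $A=(a_{ij})$ with $s\le t$, a transversal of $A$ is a set of entries $T=\{a_{1i_1},\dots,a_{si_s}\}$ with $i_1,\dots,i_s\in\{1,\dots,t\}$ pairwise distinct, and $|T|=a_{1i_1}+\cdots+a_{si_s}$; if $s>t$, the transversals of $A$ are those of its transpose. The tropical determinant is ${\rm tdet}(A)=\max_T|T|$ over all transversals $T$ of $A$. *)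

theory Defs
  imports Main
begin

text \<open>An s x t matrix with nonnegative integer entries is represented as a function
  nat => nat => nat; only the entries with row index < s and column index < t matter.\<close>

definition transversal_sums :: "nat \<Rightarrow> nat \<Rightarrow> (nat \<Rightarrow> nat \<Rightarrow> nat) \<Rightarrow> nat set" where
  "transversal_sums s t A =
     (if s \<le> t then {(\<Sum>i<s. A i (f i)) | f. inj_on f {..<s} \<and> f ` {..<s} \<subseteq> {..<t}}
      else {(\<Sum>j<t. A (g j) j) | g. inj_on g {..<t} \<and> g ` {..<t} \<subseteq> {..<s}})"

definition tdet :: "nat \<Rightarrow> nat \<Rightarrow> (nat \<Rightarrow> nat \<Rightarrow> nat) \<Rightarrow> nat" where
  "tdet s t A = Max (transversal_sums s t A)"

definition Dkl :: "nat \<Rightarrow> nat \<Rightarrow> nat \<Rightarrow> nat \<Rightarrow> (nat \<Rightarrow> nat \<Rightarrow> nat) set" where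
  "Dkl k l m n = {A. (\<forall>i j. (i \<ge> n*k \<or> j \<ge> n*l) \<longrightarrow> A i j = 0)
      \<and> (\<forall>i<n*k. (\<Sum>j<n*l. A i j) = m*l)
      \<and> (\<forall>j<n*l. (\<Sum>i<n*k. A i j) = m*k)}"

end

theory Submission
  imports Defs
begin
definition cnt :: "nat \<Rightarrow> nat \<Rightarrow> nat \<Rightarrow> nat \<Rightarrow> nat" where
 "cnt lo hi b j = card {t. lo \<le> t \<and> t < hi \<and> t mod b = j}"

lemma cnt_fin: "finite {t::nat. lo \<le> t \<and> t < hi \<and> t mod b = j}"
  by (rule finite_subset[of _ "{..<hi}"]) auto

lemma cnt_empty: "hi \<le> lo \<Longrightarrow> cnt lo hi b j = 0"
  unfolding cnt_def by auto

lemma cnt_split: assumes "lo \<le> mid" "mid \<le> hi"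
  shows "cnt lo hi b j = cnt lo mid b j + cnt mid hi b j"
proof -
  have eq: "{t. lo \<le> t \<and> t < hi \<and> t mod b = j} = {t. lo \<le> t \<and> t < mid \<and> t mod b = j} \<union> {t. mid \<le> t \<and> t < hi \<and> t mod b = j}"
    using assms by auto
  have dj: "{t. lo \<le> t \<and> t < mid \<and> t mod b = j} \<inter> {t. mid \<le> t \<and> t < hi \<and> t mod b = j} = {}"
    by auto
  show ?thesis unfolding cnt_def eq by (rule card_Un_disjoint[OF cnt_fin cnt_fin dj])
qed

lemma cnt_Suc: assumes "lo \<le> hi"
  shows "cnt lo (Suc hi) b j = cnt lo hi b j + (if hi mod b = j then 1 else 0)"
proof -
  have s: "cnt lo (Suc hi) b j = cnt lo hi b j + cnt hi (Suc hi) b j"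
    using assms by (intro cnt_split) auto
  show ?thesis
  proof (cases "hi mod b = j")
    case True
    then have "{t. hi \<le> t \<and> t < Suc hi \<and> t mod b = j} = {hi}" by auto
    then have "cnt hi (Suc hi) b j = 1" unfolding cnt_def by simp
    then show ?thesis using s True by simp
  next
    case False
    then have "{t. hi \<le> t \<and> t < Suc hi \<and> t mod b = j} = {}"
      using le_antisym less_Suc_eq_le by blast
    then have "cnt hi (Suc hi) b j = 0" unfolding cnt_def by simp
    then show ?thesis using s False by simp
  qed
qed

lemma cnt_sum: assumes "0 < b" "lo \<le> hi"
  shows "(\<Sum>j<b. cnt lo hi b j) = hi - lo"
  using assms(2)
proof (induction hi rule: dec_induct)
  case base
  then show ?case by (simp add: cnt_empty)
next
  case (step h)
  have "(\<Sum>j<b. cnt lo (Suc h) b j) = (\<Sum>j<b. cnt lo h b j) + (\<Sum>j<b. (if h mod b = j then 1 else 0))"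
    using step by (simp add: cnt_Suc sum.distrib)
  also have "(\<Sum>j<b. (if h mod b = j then 1 else 0)) = (1::nat)"
    using assms(1) by (simp add: sum.delta)
  finally show ?case using step by simp
qed

lemma mod_window_lt: fixes s u b :: nat assumes "s < u" "u - s < b" "s mod b = u mod b" shows False
proof -
  have "b dvd u - s" using mod_eq_dvd_iff_nat[of s u b] assms by (simp add: eq_commute)
  moreover have "0 < u - s" using assms by simp
  ultimately have "b \<le> u - s" by (rule dvd_imp_le)
  then show False using assms by simp
qed

lemma cnt_le1: "cnt lo (lo + b) b j \<le> 1"
proof -
  let ?S = "{t. lo \<le> t \<and> t < lo + b \<and> t mod b = j}"
  have H: "s = u" if "s \<in> ?S" "u \<in> ?S" for s u
  proof (rule ccontr)
    assume "s \<noteq> u"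
    then consider "s < u" | "u < s" by linarith
    then show False
    proof cases
      case 1
      moreover have "u - s < b" "s mod b = u mod b" using 1 that by auto
      ultimately show False using mod_window_lt[of s u b] by blast
    next
      case 2
      moreover have "s - u < b" "u mod b = s mod b" using 2 that by auto
      ultimately show False using mod_window_lt[of u s b] by blast
    qed
  qed
  show ?thesis
  proof (cases "?S = {}")
    case True
    then show ?thesis unfolding cnt_def by (simp only: card.empty)
  next
    case False
    then obtain s where s: "s \<in> ?S" by blast
    then have "?S \<subseteq> {s}" using H by blast
    then have "card ?S \<le> card {s}"
      by (rule card_mono[rotated]) simp
    moreover have "card {s} = 1" by simp
    ultimately have "card ?S \<le> 1" by linarith
    then show ?thesis unfolding cnt_def .
  qed
qed

lemma cnt_le_mult: "cnt lo (lo + c*b) b j \<le> c"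
proof (induction c)
  case 0
  then show ?case by (simp add: cnt_empty)
next
  case (Suc c)
  have "cnt lo (lo + Suc c * b) b j = cnt lo (lo + c*b) b j + cnt (lo + c*b) (lo + c*b + b) b j"
    using cnt_split[of lo "lo + c*b" "lo + c*b + b" b j] by (simp add: algebra_simps)
  then show ?case using Suc cnt_le1[of "lo + c*b" b j] by simp
qed

lemma cnt_mono: "hi \<le> hi' \<Longrightarrow> cnt lo hi b j \<le> cnt lo hi' b j"
  unfolding cnt_def by (rule card_mono[OF cnt_fin]) auto

lemma cnt_bound: "hi \<le> lo + c*b \<Longrightarrow> cnt lo hi b j \<le> c"
  using cnt_mono[of hi "lo + c*b" lo b j] cnt_le_mult[of lo c b j] by linarith

lemma cnt_exact: assumes "j < b" shows "cnt lo (lo + c*b) b j = c"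
proof (rule ccontr)
  assume "cnt lo (lo + c*b) b j \<noteq> c"
  then have lt: "cnt lo (lo + c*b) b j < c" using cnt_le_mult[of lo c b j] by simp
  have "(\<Sum>j<b. cnt lo (lo + c*b) b j) < (\<Sum>j<b. c)"
  proof (rule sum_strict_mono_ex1)
    show "\<forall>x\<in>{..<b}. cnt lo (lo + c*b) b x \<le> c" using cnt_le_mult by blast
    show "\<exists>x\<in>{..<b}. cnt lo (lo + c*b) b x < c" using lt assms by blast
  qed simp
  moreover have "(\<Sum>j<b. cnt lo (lo + c*b) b j) = c*b" using assms by (simp add: cnt_sum)
  ultimately show False by simp
qed

lemma cnt_tele: assumes "\<And>s t. s \<le> t \<Longrightarrow> P s \<le> P t"
  shows "(\<Sum>s<S. cnt (P s) (P (Suc s)) b j) = cnt (P 0) (P S) b j"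
proof (induction S)
  case 0
  then show ?case by (simp add: cnt_empty)
next
  case (Suc S)
  have "P 0 \<le> P S" "P S \<le> P (Suc S)" using assms by auto
  then show ?case using Suc cnt_split[of "P 0" "P S" "P (Suc S)" b j] by simp
qed

lemma sum_split: "(\<Sum>i<m+n. g i) = (\<Sum>i<m. g i) + (\<Sum>i<n. g (m+i::nat))"
  by (induction n) (auto simp: add.assoc)

lemma tdet_le:
  fixes A :: "nat \<Rightarrow> nat \<Rightarrow> nat" and u v :: "nat \<Rightarrow> nat"
  assumes "N \<le> M" and cap: "\<And>i j. i < N \<Longrightarrow> j < M \<Longrightarrow> A i j \<le> u i + v j"
  shows "tdet N M A \<le> (\<Sum>i<N. u i) + (\<Sum>j<M. v j)"
proof -
  let ?B = "(\<Sum>i<N. u i) + (\<Sum>j<M. v j)"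
  have bnd: "(\<Sum>i<N. A i (f i)) \<le> ?B" if f: "inj_on f {..<N}" "f ` {..<N} \<subseteq> {..<M}" for f
  proof -
    have "(\<Sum>i<N. A i (f i)) \<le> (\<Sum>i<N. u i + v (f i))"
      by (rule sum_mono) (use f cap in auto)
    also have "\<dots> = (\<Sum>i<N. u i) + (\<Sum>i<N. v (f i))" by (simp add: sum.distrib)
    also have "(\<Sum>i<N. v (f i)) = (\<Sum>j\<in>f ` {..<N}. v j)"
      using sum.reindex[OF f(1), of v] by simp
    also have "\<dots> \<le> (\<Sum>j<M. v j)" by (rule sum_mono2) (use f in auto)
    finally show ?thesis by simp
  qed
  let ?T = "{(\<Sum>i<N. A i (f i)) | f. inj_on f {..<N} \<and> f ` {..<N} \<subseteq> {..<M}}"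
  have T: "transversal_sums N M A = ?T" unfolding transversal_sums_def using assms(1) by simp
  have sub: "?T \<subseteq> {..?B}" using bnd by auto
  have fin: "finite ?T" by (rule finite_subset[OF sub]) simp
  have ne: "?T \<noteq> {}"
  proof -
    have "(\<Sum>i<N. A i (id i)) \<in> ?T" using assms(1) by force
    then show ?thesis by blast
  qed
  show ?thesis unfolding tdet_def T using fin ne sub by (simp add: Max_le_iff subset_eq)
qed

theorem proposition3p2:
  fixes k l n m q r :: nat and x y :: int
  assumes "0 < k" and "k \<le> l" and "coprime k l"
    and "1 \<le> n"
    and "m = q*n + r" and "r < n"
    and feas: "x \<ge> int (r*k)" "y \<ge> int (r*l)"
       "int q * x * y + int r * (x * int l + y * int k) \<ge> int (k*l*n*r)"
    and minimal: "\<And>x' y' :: int. x' \<ge> int (r*k) \<Longrightarrow> y' \<ge> int (r*l) \<Longrightarrow>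
        int q * x' * y' + int r * (x' * int l + y' * int k) \<ge> int (k*l*n*r) \<Longrightarrow> x + y \<le> x' + y'"
    and "x + y \<le> int (n*k)"
  shows "\<exists>A \<in> Dkl k l m n. int (tdet (n*k) (n*l) A) \<le> int (n*k*q) + x + y"
proof -
  define a where "a = nat x"
  define b where "b = nat y"
  have x0: "0 \<le> x" using feas(1) of_nat_0_le_iff[of "r*k"] by linarith
  have y0: "0 \<le> y" using feas(2) of_nat_0_le_iff[of "r*l"] by linarith
  have xa: "x = int a" using x0 unfolding a_def by simp
  have yb: "y = int b" using y0 unfolding b_def by simp
  have ha: "r*k \<le> a" using feas(1) unfolding xa by (metis of_nat_le_iff)
  have hb: "r*l \<le> b" using feas(2) unfolding yb by (metis of_nat_le_iff)
  have hab: "a + b \<le> n*k" using assms(11) unfolding xa yb by (metis of_nat_le_iff of_nat_add)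
  have "int (k*l*n*r) \<le> int (q*a*b + r*(a*l + b*k))"
    using feas(3) unfolding xa yb by (metis of_nat_add of_nat_mult)
  then have cond: "k*l*n*r \<le> q*a*b + r*(a*l + b*k)" by linarith
  define N where "N = n*k"
  define M where "M = n*l"
  define N' where "N' = N - a"
  define M' where "M' = M - b"
  have NM: "N \<le> M" unfolding N_def M_def using assms(2) by simp
  have aN: "a \<le> N" "b \<le> M" using hab NM unfolding N_def by auto
  have NN: "N = N' + a" "M = M' + b" using aN unfolding N'_def M'_def by auto
  have NlMk: "N*l = M*k" unfolding N_def M_def by simp
  have b0: "r = 0" if "b = 0" using hb that assms(1,2) by simp
  have a0: "r = 0" if "a = 0" using ha that assms(1) by simp
  define f where "f j = cnt 0 (N'*(r*l)) b j" for j
  define c where "c j = (if j < M' then q*a + r*k else q*a + r*k - f (j - M'))" for j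
  define Cp where "Cp j = (\<Sum>j'<j. c j')" for j
  define A where "A i j = (if i < N \<and> j < M then (if i < N' then (if j < M' then q
      else q + cnt (i*(r*l)) (Suc i*(r*l)) b (j - M')) else cnt (Cp j) (Cp (Suc j)) a (i - N')) else 0)" for i j
  have key: "N'*(r*l) \<le> (q*a + r*k)*b"
  proof -
    have e1: "N'*(r*l) + a*(r*l) = k*l*n*r" using NN unfolding N_def
      by (metis add_mult_distrib mult.commute mult.left_commute)
    have e2: "(q*a + r*k)*b + r*(a*l) = q*a*b + r*(a*l + b*k)" by (simp add: algebra_simps)
    have e3: "a*(r*l) = r*(a*l)" by simp
    show ?thesis using cond e1 e2 e3 by linarith
  qed
  have fle: "f j \<le> q*a + r*k" for j
    unfolding f_def by (rule cnt_bound) (use key in simp)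
  have fsum: "(\<Sum>j<b. f j) = N'*(r*l)"
  proof (cases "b = 0")
    case True then show ?thesis using b0 by simp
  next
    case False then show ?thesis unfolding f_def by (simp add: cnt_sum)
  qed
  have cle: "c j \<le> q*a + r*k" for j unfolding c_def by auto
  have cle2: "c j \<le> (q+1)*a" for j using cle[of j] ha by simp
  have Cp_Suc: "Cp (Suc j) = Cp j + c j" for j unfolding Cp_def by simp
  have Cp_mono: "Cp s \<le> Cp t" if "s \<le> t" for s t
    unfolding Cp_def by (rule sum_mono2) (use that in auto)
  have c0: "c j = 0" if "a = 0" for j
  proof -
    have "r = 0" using a0 that by simp
    then show ?thesis unfolding c_def f_def using that by (simp add: cnt_empty)
  qed
  have CpM: "Cp M = a*(q*M + r*l)"
  proof -
    have "Cp M = (\<Sum>j<M'. c j) + (\<Sum>j<b. c (M'+j))" unfolding Cp_def NN(2) by (rule sum_split)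
    also have "(\<Sum>j<M'. c j) = M'*(q*a+r*k)" unfolding c_def by simp
    also have "(\<Sum>j<b. c (M'+j)) = (\<Sum>j<b. q*a + r*k - f j)" unfolding c_def by simp
    finally have h1: "Cp M = M'*(q*a+r*k) + (\<Sum>j<b. q*a + r*k - f j)" .
    have "(\<Sum>j<b. q*a + r*k - f j) + (\<Sum>j<b. f j) = (\<Sum>j<b. q*a + r*k - f j + f j)"
      by (simp add: sum.distrib)
    also have "\<dots> = b*(q*a+r*k)" using fle by simp
    finally have h2: "(\<Sum>j<b. q*a + r*k - f j) + N'*(r*l) = b*(q*a+r*k)" using fsum by simp
    have h3: "Cp M + N'*(r*l) = M*(q*a+r*k)" using h1 h2 NN(2) by (simp add: algebra_simps)
    have h4: "a*(q*M + r*l) + N'*(r*l) = M*(q*a+r*k)"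
    proof -
      have "a*(q*M + r*l) + N'*(r*l) = a*q*M + r*(N*l)" using NN(1) by (simp add: algebra_simps)
      also have "\<dots> = M*(q*a+r*k)" using NlMk by (simp add: algebra_simps)
      finally show ?thesis .
    qed
    show ?thesis using h3 h4 by linarith
  qed
  have ml: "m*l = q*M + r*l" unfolding M_def assms(5) by (simp add: algebra_simps)
  have mk: "m*k = q*N + r*k" unfolding N_def assms(5) by (simp add: algebra_simps)
  have rows: "(\<Sum>j<M. A i j) = m*l" if i: "i < N" for i
  proof (cases "i < N'")
    case True
    have "(\<Sum>j<M. A i j) = (\<Sum>j<M'. A i j) + (\<Sum>j<b. A i (M'+j))" unfolding NN(2) by (rule sum_split)
    also have "(\<Sum>j<M'. A i j) = M'*q" unfolding A_def using True i NN by simp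
    also have "(\<Sum>j<b. A i (M'+j)) = (\<Sum>j<b. q + cnt (i*(r*l)) (Suc i*(r*l)) b j)"
      unfolding A_def using True i NN by simp
    also have "\<dots> = b*q + r*l"
    proof (cases "b = 0")
      case True then show ?thesis using b0 by simp
    next
      case False then show ?thesis by (simp add: sum.distrib cnt_sum)
    qed
    finally show ?thesis using ml NN(2) by (simp add: algebra_simps)
  next
    case False
    have "(\<Sum>j<M. A i j) = (\<Sum>j<M. cnt (Cp j) (Cp (Suc j)) a (i - N'))"
      unfolding A_def using False i by simp
    also have "\<dots> = cnt (Cp 0) (Cp M) a (i - N')" by (rule cnt_tele) (rule Cp_mono)
    also have "\<dots> = cnt 0 (0 + (q*M + r*l)*a) a (i - N')" using CpM unfolding Cp_def
      by (simp add: mult.commute)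
    also have "\<dots> = q*M + r*l" by (rule cnt_exact) (use False i NN in simp)
    finally show ?thesis using ml by simp
  qed
  have cols: "(\<Sum>i<N. A i j) = m*k" if j: "j < M" for j
  proof -
    have "(\<Sum>i<N. A i j) = (\<Sum>i<N'. A i j) + (\<Sum>i<a. A (N'+i) j)" unfolding NN(1) by (rule sum_split)
    also have "(\<Sum>i<a. A (N'+i) j) = (\<Sum>i<a. cnt (Cp j) (Cp (Suc j)) a i)"
      unfolding A_def using j NN by simp
    also have "\<dots> = c j"
    proof (cases "a = 0")
      case True then show ?thesis using c0 by simp
    next
      case False then show ?thesis by (simp add: cnt_sum Cp_Suc)
    qed
    finally have s1: "(\<Sum>i<N. A i j) = (\<Sum>i<N'. A i j) + c j" .
    show ?thesis
    proof (cases "j < M'")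
      case True
      have "(\<Sum>i<N'. A i j) = N'*q" unfolding A_def using True j NN by simp
      then show ?thesis using s1 True mk NN(1) unfolding c_def by (simp add: algebra_simps)
    next
      case False
      have "(\<Sum>i<N'. A i j) = (\<Sum>i<N'. q + cnt (i*(r*l)) (Suc i*(r*l)) b (j - M'))"
        unfolding A_def using False j NN by simp
      also have "\<dots> = N'*q + cnt (0*(r*l)) (N'*(r*l)) b (j - M')"
      proof -
        have mono: "\<And>s t. s \<le> t \<Longrightarrow> (\<lambda>s. s*(r*l)) s \<le> (\<lambda>s. s*(r*l)) t"
          by (simp add: mult_right_mono)
        have "(\<Sum>i<N'. cnt (i*(r*l)) (Suc i*(r*l)) b (j - M')) = cnt (0*(r*l)) (N'*(r*l)) b (j - M')"
          using cnt_tele[where P="\<lambda>s. s*(r*l)" and S=N' and b=b and j="j - M'"] mono by simp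
        then show ?thesis by (simp add: sum.distrib)
      qed
      also have "\<dots> = N'*q + f (j - M')" unfolding f_def by simp
      finally show ?thesis using s1 False mk NN(1) fle[of "j - M'"] unfolding c_def
        by (simp add: algebra_simps)
    qed
  qed
  have inD: "A \<in> Dkl k l m n"
  proof -
    have z: "\<forall>i j. (i \<ge> n*k \<or> j \<ge> n*l) \<longrightarrow> A i j = 0" unfolding A_def N_def M_def by auto
    have r2: "\<forall>i<n*k. (\<Sum>j<n*l. A i j) = m*l" using rows unfolding N_def M_def by blast
    have c2: "\<forall>j<n*l. (\<Sum>i<n*k. A i j) = m*k" using cols unfolding N_def M_def by blast
    show ?thesis unfolding Dkl_def using z r2 c2 by blast
  qed
  define u where "u i = q + (if N' \<le> i then 1 else 0)" for i
  define v where "v j = (if M' \<le> j then 1 else (0::nat))" for j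
  have cap: "A i j \<le> u i + v j" if "i < N" "j < M" for i j
  proof (cases "i < N'")
    case True
    show ?thesis
    proof (cases "j < M'")
      case True then show ?thesis using \<open>i < N'\<close> that unfolding A_def u_def v_def by simp
    next
      case False
      have "cnt (i*(r*l)) (Suc i*(r*l)) b (j - M') \<le> 1" by (rule cnt_bound) (use hb in simp)
      then show ?thesis using \<open>i < N'\<close> False that unfolding A_def u_def v_def by simp
    qed
  next
    case False
    have "cnt (Cp j) (Cp (Suc j)) a (i - N') \<le> q+1" by (rule cnt_bound) (use cle2 Cp_Suc in simp)
    then show ?thesis using False that unfolding A_def u_def v_def by simp
  qed
  have "tdet N M A \<le> (\<Sum>i<N. u i) + (\<Sum>j<M. v j)" by (rule tdet_le[OF NM cap])
  also have "(\<Sum>i<N. u i) = N*q + a"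
  proof -
    have "(\<Sum>i<N. u i) = (\<Sum>i<N'. u i) + (\<Sum>i<a. u (N'+i))" unfolding NN(1) by (rule sum_split)
    then show ?thesis unfolding u_def using NN(1) by (simp add: algebra_simps)
  qed
  also have "(\<Sum>j<M. v j) = b"
  proof -
    have "(\<Sum>j<M. v j) = (\<Sum>j<M'. v j) + (\<Sum>j<b. v (M'+j))" unfolding NN(2) by (rule sum_split)
    then show ?thesis unfolding v_def by simp
  qed
  finally have "tdet N M A \<le> N*q + a + b" .
  then have "int (tdet (n*k) (n*l) A) \<le> int (n*k*q) + x + y"
    unfolding xa yb N_def M_def by linarith
  then show ?thesis using inD by blast
qed

end
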